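(* Define, for $u\geq0$, $$\mathcal{J}_\alpha(u)=\begin{cases}\frac{1}{\alpha(\alpha-1)}\Big(\big(1-\frac{1-\alpha}{4\alpha}u\big)_+^\alpha-1\Big)&\alpha\in(0,\tfrac12),\\[3pt]\frac{1}{\alpha(\alpha-1)}\Big(\big(1-\frac{1-\alpha}{2}u\big)_+^\alpha-1\Big)&\alpha\in[\tfrac12,1),\end{cases}$$ $$\mathcal{J}^\flat_\alpha(u)=\begin{cases}\frac{1}{\alpha(\alpha-1)}\Big[\big(1-\frac{(1-\alpha)^2}{2\alpha}u\big)_+^{\frac{\alpha}{2(1-\alpha)}}-1\Big]&\alpha\in(0,\tfrac12),\\[3pt]\frac{1}{\alpha(\alpha-1)}\Big[\big(1-(1-\alpha)^2u\big)_+^{\frac{\alpha}{2(1-\alpha)}}-1\Big]&\alpha\in[\tfrac12,1),\end{cases}$$ where $(s)_+=\max\{s,0\}$. Then for all $\tfrac12\leq\alpha<1$, $\mathcal{J}^\flat_\alpha(u)\leq\mathcal{J}_\alpha(u)$ for all $u\geq0$; and for all $0<\alpha<\tfrac12$, $\mathcal{J}_\alpha(u)\leq\mathcal{J}^\flat_\alpha(u)$ for all $u\geq0$. *)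

theory Defs
  imports Complex_Main
begin

definition pos_part :: "real \<Rightarrow> real" where
  "pos_part s = max s 0"

definition J :: "real \<Rightarrow> real \<Rightarrow> real" where
  "J \<alpha> u =
    (if \<alpha> < 1/2
     then (1 / (\<alpha> * (\<alpha> - 1))) * (pos_part (1 - (1 - \<alpha>) / (4 * \<alpha>) * u) powr \<alpha> - 1)
     else (1 / (\<alpha> * (\<alpha> - 1))) * (pos_part (1 - (1 - \<alpha>) / 2 * u) powr \<alpha> - 1))"

definition Jflat :: "real \<Rightarrow> real \<Rightarrow> real" where
  "Jflat \<alpha> u =
    (if \<alpha> < 1/2
     then (1 / (\<alpha> * (\<alpha> - 1))) *
          (pos_part (1 - (1 - \<alpha>)^2 / (2 * \<alpha>) * u) powr (\<alpha> / (2 * (1 - \<alpha>))) - 1)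
     else (1 / (\<alpha> * (\<alpha> - 1))) *
          (pos_part (1 - (1 - \<alpha>)^2 * u) powr (\<alpha> / (2 * (1 - \<alpha>))) - 1))"

end

theory Submission
  imports Defs "HOL-Analysis.Convex"
begin

lemma conc_powr:
  fixes y p :: real
  assumes "0 \<le> p" "p \<le> 1" "0 \<le> y"
  shows "y powr p \<le> p * y + (1 - p)"
proof (cases "y = 0")
  case True
  then show ?thesis using assms by auto
next
  case False
  then have "y powr p * 1 powr (1 - p) \<le> p * y + (1 - p) * 1"
    using assms by (intro Youngs_inequality_0) auto
  then show ?thesis by simp
qed

lemma bern_ge:
  fixes x p :: real
  assumes "1 \<le> p" "0 \<le> x" "x \<le> 1"
  shows "1 - p * x \<le> (1 - x) powr p"
proof -
  define z where "z = (1 - x) powr p"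
  have z0: "0 \<le> z" unfolding z_def by simp
  have "z powr (1/p) = (1 - x) powr (p * (1/p))"
    unfolding z_def using assms by (simp add: powr_powr)
  also have "\<dots> = 1 - x" using assms by simp
  finally have e: "z powr (1/p) = 1 - x" .
  have "z powr (1/p) \<le> (1/p) * z + (1 - 1/p)"
    using assms z0 by (intro conc_powr) auto
  then have "1 - x \<le> z / p + 1 - 1 / p" using e by simp
  then have "p * (1 - x) \<le> p * (z / p + 1 - 1 / p)"
    using assms by (intro mult_left_mono) auto
  also have "\<dots> = z + p - 1" using assms by (simp add: field_simps)
  finally show ?thesis unfolding z_def by (simp add: algebra_simps)
qed

lemma bern_le:
  fixes x p :: real
  assumes "0 \<le> p" "p \<le> 1" "x \<le> 1"
  shows "(1 - x) powr p \<le> 1 - p * x"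
  using conc_powr[of p "1 - x"] assms by (simp add: algebra_simps)

lemma partA:
  fixes \<alpha> u :: real
  assumes "1/2 \<le> \<alpha>" "\<alpha> < 1" "u \<ge> 0"
  shows "Jflat \<alpha> u \<le> J \<alpha> u"
proof -
  define p where "p = 1 / (2 * (1 - \<alpha>))"
  define x where "x = (1 - \<alpha>)^2 * u"
  have p1: "1 \<le> p" unfolding p_def using assms by (simp add: field_simps)
  have x0: "0 \<le> x" unfolding x_def using assms by simp
  have px: "p * x = (1 - \<alpha>) / 2 * u"
    unfolding p_def x_def using assms by (simp add: field_simps power2_eq_square)
  have key: "pos_part (1 - (1 - \<alpha>) / 2 * u) \<le> pos_part (1 - x) powr p"
  proof (cases "x \<le> 1")
    case True
    have "1 - p * x \<le> (1 - x) powr p" using bern_ge[OF p1 x0 True] .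
    then show ?thesis using True px by (simp add: pos_part_def)
  next
    case False
    have "p * x > 1" using False p1 mult_le_less_imp_less[of 1 p 1 x] by simp
    then show ?thesis using px by (simp add: pos_part_def)
  qed
  have "pos_part (1 - (1 - \<alpha>) / 2 * u) powr \<alpha> \<le> (pos_part (1 - x) powr p) powr \<alpha>"
    using key assms by (intro powr_mono2) (auto simp: pos_part_def)
  also have "\<dots> = pos_part (1 - x) powr (\<alpha> / (2 * (1 - \<alpha>)))"
    by (simp add: powr_powr p_def)
  finally have ineq: "pos_part (1 - (1 - \<alpha>) / 2 * u) powr \<alpha> \<le> pos_part (1 - x) powr (\<alpha> / (2 * (1 - \<alpha>)))" .
  have c: "1 / (\<alpha> * (\<alpha> - 1)) < 0" using assms by (simp add: divide_neg_pos mult_pos_neg)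
  have "(1 / (\<alpha> * (\<alpha> - 1))) * (pos_part (1 - x) powr (\<alpha> / (2 * (1 - \<alpha>))) - 1)
      \<le> (1 / (\<alpha> * (\<alpha> - 1))) * (pos_part (1 - (1 - \<alpha>) / 2 * u) powr \<alpha> - 1)"
    using ineq c by (intro mult_left_mono_neg) auto
  then show ?thesis using assms unfolding J_def Jflat_def x_def by simp
qed

lemma partB:
  fixes \<alpha> u :: real
  assumes "0 < \<alpha>" "\<alpha> < 1/2" "u \<ge> 0"
  shows "J \<alpha> u \<le> Jflat \<alpha> u"
proof -
  define p where "p = 1 / (2 * (1 - \<alpha>))"
  define x where "x = (1 - \<alpha>)^2 / (2 * \<alpha>) * u"
  have p0: "0 < p" "p \<le> 1" unfolding p_def using assms by (auto simp: field_simps)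
  have x0: "0 \<le> x" unfolding x_def using assms by simp
  have px: "p * x = (1 - \<alpha>) / (4 * \<alpha>) * u"
    unfolding p_def x_def using assms by (simp add: field_simps power2_eq_square)
  have key: "pos_part (1 - x) powr p \<le> pos_part (1 - (1 - \<alpha>) / (4 * \<alpha>) * u)"
  proof (cases "x \<le> 1")
    case True
    have "(1 - x) powr p \<le> 1 - p * x" using bern_le[of p x] p0 True by simp
    then show ?thesis using True px by (simp add: pos_part_def)
  next
    case False
    then show ?thesis using p0 by (simp add: pos_part_def)
  qed
  have "pos_part (1 - x) powr (\<alpha> / (2 * (1 - \<alpha>))) = (pos_part (1 - x) powr p) powr \<alpha>"
    by (simp add: powr_powr p_def)
  also have "\<dots> \<le> pos_part (1 - (1 - \<alpha>) / (4 * \<alpha>) * u) powr \<alpha>"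
    using key assms by (intro powr_mono2) (auto simp: pos_part_def)
  finally have ineq: "pos_part (1 - x) powr (\<alpha> / (2 * (1 - \<alpha>))) \<le> pos_part (1 - (1 - \<alpha>) / (4 * \<alpha>) * u) powr \<alpha>" .
  have c: "1 / (\<alpha> * (\<alpha> - 1)) < 0" using assms by (simp add: divide_neg_pos mult_pos_neg)
  have "(1 / (\<alpha> * (\<alpha> - 1))) * (pos_part (1 - (1 - \<alpha>) / (4 * \<alpha>) * u) powr \<alpha> - 1)
      \<le> (1 / (\<alpha> * (\<alpha> - 1))) * (pos_part (1 - x) powr (\<alpha> / (2 * (1 - \<alpha>))) - 1)"
    using ineq c by (intro mult_left_mono_neg) auto
  then show ?thesis using assms unfolding J_def Jflat_def x_def by simp
qed

theorem lemmaB1: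
  shows "(\<forall>\<alpha>::real. 1/2 \<le> \<alpha> \<and> \<alpha> < 1 \<longrightarrow> (\<forall>u::real. u \<ge> 0 \<longrightarrow> Jflat \<alpha> u \<le> J \<alpha> u))
       \<and> (\<forall>\<alpha>::real. 0 < \<alpha> \<and> \<alpha> < 1/2 \<longrightarrow> (\<forall>u::real. u \<ge> 0 \<longrightarrow> J \<alpha> u \<le> Jflat \<alpha> u))"
  using partA partB by blast

end
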